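(* Let $g,p,q$ be real univariate polynomials with $\deg(g)=m$, $\deg(p)=2d$ and $\deg(q)=2d-2m$, such that $p$ and $q$ are sums of squares and $g$ and $q$ are coprime. Then there exists a sum of squares polynomial $s\in\Sigma[x]_{2m}$ such that $p\equiv sq\pmod g$.
   Context: $\Sigma[x]_{2m}$ denotes the cone of real univariate polynomials of degree at most $2m$ that are sums of squares of real polynomials (of degree at most $m$). $a\equiv b\pmod g$ means $a=b+wg$ for some real polynomial $w$. Coprime means the greatest common divisor is a constant. *)

theory Defs
  imports "HOL-Computational_Algebra.Polynomial"
begin

definition is_sos :: "real poly \<Rightarrow> bool" where
  "is_sos p \<longleftrightarrow> (\<exists>fs :: real poly list. p = (\<Sum>f\<leftarrow>fs. f ^ 2))"

definition sos_cone :: "nat \<Rightarrow> real poly set" where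
  "sos_cone k = {p. \<exists>fs :: real poly list. (\<forall>f\<in>set fs. 2 * degree f \<le> k) \<and> p = (\<Sum>f\<leftarrow>fs. f ^ 2)}"

definition poly_cong :: "real poly \<Rightarrow> real poly \<Rightarrow> real poly \<Rightarrow> bool" where
  "poly_cong a b g \<longleftrightarrow> (\<exists>w. a = b + w * g)"

end

theory Submission
  imports Defs "HOL-Computational_Algebra.Polynomial_Factorial" "HOL-Computational_Algebra.Field_as_Ring"
begin

lemma sos_add: "is_sos a \<Longrightarrow> is_sos b \<Longrightarrow> is_sos (a + b)"
  unfolding is_sos_def
proof -
  assume "\<exists>fs. a = (\<Sum>f\<leftarrow>fs. f ^ 2)" "\<exists>fs. b = (\<Sum>f\<leftarrow>fs. f ^ 2)"
  then obtain fs gs where "a = (\<Sum>f\<leftarrow>fs. f ^ 2)" "b = (\<Sum>f\<leftarrow>gs. f ^ 2)" by blast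
  then show "\<exists>fs. a + b = (\<Sum>f\<leftarrow>fs. f ^ 2)" by (intro exI[of _ "fs @ gs"]) simp
qed

lemma sos_sq_mult: "is_sos b \<Longrightarrow> is_sos (f ^ 2 * b)"
  unfolding is_sos_def
proof -
  assume "\<exists>fs. b = (\<Sum>f\<leftarrow>fs. f ^ 2)"
  then obtain hs where hs: "b = (\<Sum>h\<leftarrow>hs. h ^ 2)" by blast
  have "f ^ 2 * b = (\<Sum>h\<leftarrow>map ((*) f) hs. h ^ 2)"
    unfolding hs by (simp add: sum_list_const_mult[symmetric] o_def power_mult_distrib)
  then show "\<exists>fs. f ^ 2 * b = (\<Sum>f\<leftarrow>fs. f ^ 2)" by blast
qed

lemma sos_mult_list: "is_sos b \<Longrightarrow> is_sos ((\<Sum>f\<leftarrow>fs. f ^ 2) * b)"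
proof (induction fs)
  case Nil
  then show ?case by (auto simp: is_sos_def intro: exI[of _ "[]"])
next
  case (Cons f fs)
  then show ?case using sos_add[OF sos_sq_mult[OF Cons.prems, of f] Cons.IH]
    by (simp add: distrib_right)
qed

lemma sos_mult: "is_sos a \<Longrightarrow> is_sos b \<Longrightarrow> is_sos (a * b)"
  using sos_mult_list unfolding is_sos_def[of a] by blast

lemma sos_reduce:
  fixes g :: "real poly"
  assumes "g \<noteq> 0"
  shows "g dvd ((\<Sum>r\<leftarrow>rs. r ^ 2) - (\<Sum>r\<leftarrow>rs. (r mod g) ^ 2))"
proof (induction rs)
  case Nil
  then show ?case by simp
next
  case (Cons r rs)
  have "g dvd r - r mod g"
    by (metis minus_mod_eq_mult_div dvd_triv_left)
  then have "g dvd r ^ 2 - (r mod g) ^ 2"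
    by (metis dvd_mult2 power2_eq_square square_diff_square_factored mult.commute)
  then have "g dvd (r ^ 2 - (r mod g) ^ 2) + ((\<Sum>r\<leftarrow>rs. r ^ 2) - (\<Sum>r\<leftarrow>rs. (r mod g) ^ 2))"
    using Cons.IH by (rule dvd_add)
  then show ?case by (simp add: algebra_simps)
qed

lemma sos_poly_nonneg: "poly (\<Sum>f\<leftarrow>fs. f ^ 2) (x::real) \<ge> 0"
  by (induction fs) auto

theorem lemma3p9:
  fixes g p q :: "real poly" and m d :: nat
  assumes "degree g = m"
    and "degree p = 2 * d"
    and "int (degree q) = 2 * int d - 2 * int m"
    and "is_sos p" and "is_sos q"
    and "coprime g q"
  shows "\<exists>s \<in> sos_cone (2 * m). poly_cong p (s * q) g"
proof (cases "g = 0")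
  case True
  then have "is_unit q" using assms(6) by simp
  then have dq: "degree q = 0" by (metis is_unit_iff_degree not_is_unit_0)
  have m0: "m = 0" using assms(1) True by simp
  then have "d = 0" using assms(3) dq by simp
  then have dp: "degree p = 0" using assms(2) by simp
  obtain c where qc: "q = [:c:]" using dq by (metis degree_eq_zeroE)
  have "c \<noteq> 0" using \<open>is_unit q\<close> qc by auto
  obtain fs where fs: "p = (\<Sum>f\<leftarrow>fs. f ^ 2)" using assms(4) unfolding is_sos_def by blast
  obtain hs where hs: "q = (\<Sum>f\<leftarrow>hs. f ^ 2)" using assms(5) unfolding is_sos_def by blast
  have pev: "poly p 0 \<ge> 0" unfolding fs
    by (rule sos_poly_nonneg)
  have "poly q 0 \<ge> 0" unfolding hs
    by (rule sos_poly_nonneg)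
  then have cpos: "c > 0" using qc \<open>c \<noteq> 0\<close> by simp
  obtain a where pa: "p = [:a:]" using dp by (metis degree_eq_zeroE)
  have a0: "a \<ge> 0" using pev pa by simp
  define s where "s = [:sqrt (a / c):] ^ 2"
  have "s \<in> sos_cone (2 * m)" unfolding sos_cone_def s_def
    by (intro CollectI exI[of _ "[[:sqrt (a / c):]]"]) simp
  moreover have "p = s * q"
  proof -
    have "sqrt (a / c) ^ 2 = a / c" using a0 cpos by simp
    then have "s * q = [:a / c * c:]" unfolding s_def qc poly_const_pow mult_to_poly by simp
    then show ?thesis using cpos pa by simp
  qed
  ultimately show ?thesis unfolding poly_cong_def by (intro bexI[of _ s]) (auto intro: exI[of _ 0])
next
  case False
  have "gcd g q = 1" using assms(6) by simp
  then obtain u v where uv: "v * g + u * q = 1"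
    using bezout_coefficients_fst_snd[of g q] by metis
  have "is_sos (p * (u ^ 2 * q))"
    using sos_mult[OF assms(4) sos_sq_mult[OF assms(5)]] .
  then obtain rs where rs: "p * (u ^ 2 * q) = (\<Sum>r\<leftarrow>rs. r ^ 2)" unfolding is_sos_def by blast
  define s where "s = (\<Sum>r\<leftarrow>map (\<lambda>r. r mod g) rs. r ^ 2)"
  have s_eq: "s = (\<Sum>r\<leftarrow>rs. (r mod g) ^ 2)" unfolding s_def by (simp add: o_def)
  have "s \<in> sos_cone (2 * m)" unfolding sos_cone_def s_def
  proof (intro CollectI exI conjI ballI refl)
    fix f assume "f \<in> set (map (\<lambda>r. r mod g) rs)"
    then obtain r where "f = r mod g" by auto
    then have "f = 0 \<or> degree f < degree g" using degree_mod_less[OF False] by auto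
    then show "2 * degree f \<le> 2 * m" using assms(1) by auto
  qed simp
  moreover have "g dvd p - s * q"
  proof -
    have d1: "g dvd (p * (u ^ 2 * q) - s) * q"
      using sos_reduce[OF False, of rs] unfolding rs s_eq by simp
    have "1 - u * q = v * g" using uv by (simp add: algebra_simps)
    then have "g dvd 1 - u * q" by simp
    then have d2: "g dvd p * (1 + u * q) * (1 - u * q)" by simp
    have "p - s * q = p * (1 + u * q) * (1 - u * q) + (p * (u ^ 2 * q) - s) * q"
      by (simp add: algebra_simps power2_eq_square)
    then show ?thesis using dvd_add[OF d2 d1] by simp
  qed
  then obtain k where "p - s * q = g * k" by (elim dvdE)
  then have "poly_cong p (s * q) g" unfolding poly_cong_def
    by (intro exI[of _ k]) (simp add: algebra_simps)
  ultimately show ?thesis by blast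
qed

end
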